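(* Let $G$ be a finite metacyclic group of even order. Then $G$ has a cyclic normal subgroup $N$ such that $G/N$ is cyclic of even order. If moreover $G$ is split metacyclic, then $G\cong C_m\rtimes C_n$ for some $m,n$ with $n$ even.
   Context: A finite group $G$ is metacyclic if it has a cyclic normal subgroup $N$ with $G/N$ cyclic. $G$ is split metacyclic if $G\cong C_m\rtimes C_n$ for some $m,n$, where $C_k$ is the cyclic group of order $k$. *)

theory Defs
  imports "HOL-Algebra.Algebra"
begin

definition semidirect_product ::
  "('a, 'c) monoid_scheme \<Rightarrow> ('b, 'd) monoid_scheme \<Rightarrow> ('b \<Rightarrow> 'a \<Rightarrow> 'a) \<Rightarrow> ('a \<times> 'b) monoid"
  where "semidirect_product N H phi =
    \<lparr>carrier = carrier N \<times> carrier H,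
     monoid.mult = (\<lambda>(a, b) (c, d). (a \<otimes>\<^bsub>N\<^esub> phi b c, b \<otimes>\<^bsub>H\<^esub> d)),
     one = (\<one>\<^bsub>N\<^esub>, \<one>\<^bsub>H\<^esub>)\<rparr>"

definition metacyclic :: "('g, 'e) monoid_scheme \<Rightarrow> bool"
  where "metacyclic G \<longleftrightarrow>
    (\<exists>N. N \<lhd> G \<and> cyclic_group (G\<lparr>carrier := N\<rparr>) \<and> cyclic_group (G Mod N))"

text \<open>C_k is the cyclic group of order k, i.e. integers mod k (k > 0).
  A semidirect product C_m \<rtimes> C_n is given by a homomorphism C_n \<rightarrow> Aut(C_m).\<close>
definition is_split_metacyclic_with :: "('g, 'e) monoid_scheme \<Rightarrow> nat \<Rightarrow> nat \<Rightarrow> bool"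
  where "is_split_metacyclic_with G m n \<longleftrightarrow> 0 < m \<and> 0 < n \<and>
    (\<exists>phi. phi \<in> hom (integer_mod_group n) (AutoGroup (integer_mod_group m)) \<and>
       G \<cong> semidirect_product (integer_mod_group m) (integer_mod_group n) phi)"

definition split_metacyclic :: "('g, 'e) monoid_scheme \<Rightarrow> bool"
  where "split_metacyclic G \<longleftrightarrow> (\<exists>m n. is_split_metacyclic_with G m n)"

end

theory Submission
  imports Defs
begin


lemma (in group) odd_pow_inv2:
  assumes A: "A \<in> carrier G" and AA: "A \<otimes> A = \<one>" and n: "odd n"
  shows "A [^] (n::nat) = A"
proof -
  obtain r where r: "n = 2*r + 1" using n oddE by blast
  have "A [^] (2::nat) = \<one>" using AA A by (simp add: numeral_2_eq_2)
  hence "A [^] (2*r) = \<one>" using A by (simp add: nat_pow_pow[symmetric])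
  thus ?thesis using A r by (simp add: nat_pow_mult[symmetric])
qed

lemma (in group) cyc_lemma:
  assumes A: "A \<in> carrier G" and Y: "Y \<in> carrier G" and AA: "A \<otimes> A = \<one>"
    and comm: "A \<otimes> Y = Y \<otimes> A" and n: "odd n"
    and Xn: "Y [^] (n::nat) = \<one> \<or> Y [^] n = A"
    and gen: "\<forall>y\<in>carrier G. \<exists>(i::int) (j::int). y = A [^] i \<otimes> Y [^] j"
  shows "cyclic_group G"
  unfolding cyclic_group
proof (cases "Y [^] n = A")
  case True
  show "\<exists>x\<in>carrier G. carrier G = range (\<lambda>n::int. x [^] n)"
  proof (intro bexI[of _ Y] equalityI subsetI)
    fix y assume "y \<in> carrier G"
    then obtain i j :: int where y: "y = A [^] i \<otimes> Y [^] j" using gen by blast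
    have "A [^] i = Y [^] (int n * i)"
      using True Y by (metis int_pow_int int_pow_pow)
    hence "y = Y [^] (int n * i + j)" using y Y by (simp add: int_pow_mult)
    thus "y \<in> range (\<lambda>n::int. Y [^] n)" by blast
  qed (use Y in auto)
next
  case False
  hence X1: "Y [^] n = \<one>" using Xn by blast
  define Z where "Z = A \<otimes> Y"
  have Z: "Z \<in> carrier G" using A Y Z_def by simp
  have Zn: "Z [^] (int n) = A"
    using Z_def pow_mult_distrib[OF comm A Y] A Y X1 odd_pow_inv2[OF A AA n]
    by (simp add: int_pow_int)
  have "Z [^] (int n + 1) = Y"
    using Zn Z A Y AA by (simp add: int_pow_mult Z_def m_assoc[symmetric])
  show "\<exists>x\<in>carrier G. carrier G = range (\<lambda>n::int. x [^] n)"
  proof (intro bexI[of _ Z] equalityI subsetI)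
    fix y assume "y \<in> carrier G"
    then obtain i j :: int where y: "y = A [^] i \<otimes> Y [^] j" using gen by blast
    have "A [^] i = Z [^] (int n * i)"
      using Zn Z by (metis int_pow_pow)
    moreover have "Y [^] j = Z [^] ((int n + 1) * j)"
      using \<open>Z [^] (int n + 1) = Y\<close> Z by (metis int_pow_pow)
    ultimately have "y = Z [^] (int n * i + (int n + 1) * j)" using y Z by (simp add: int_pow_mult)
    thus "y \<in> range (\<lambda>n::int. Z [^] n)" by blast
  qed (use Z in auto)
qed

lemma (in group) lcancel':
  "x \<in> carrier G \<Longrightarrow> y \<in> carrier G \<Longrightarrow> z \<in> carrier G \<Longrightarrow> x \<otimes> y = x \<otimes> z \<Longrightarrow> y = z"
  by simp

lemma (in group) conj_int_pow:
  assumes g: "g \<in> carrier G" and x: "x \<in> carrier G"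
  shows "g \<otimes> x [^] (k::int) \<otimes> inv g = (g \<otimes> x \<otimes> inv g) [^] k"
proof -
  have h: "(\<lambda>x. g \<otimes> x \<otimes> inv g) \<in> hom G G"
  proof (intro homI)
    fix x y assume "x \<in> carrier G" "y \<in> carrier G"
    moreover have "inv g \<otimes> (g \<otimes> z) = z" if "z \<in> carrier G" for z
      using g that by (simp add: m_assoc[symmetric])
    ultimately show "g \<otimes> (x \<otimes> y) \<otimes> inv g = g \<otimes> x \<otimes> inv g \<otimes> (g \<otimes> y \<otimes> inv g)"
      using g by (simp add: m_assoc)
  qed (use g in auto)
  show ?thesis using hom_int_pow[OF h x is_group is_group] by simp
qed

lemma (in group) part1:
  assumes fin: "finite (carrier G)" and ev: "even (order G)"
    and nN: "N \<lhd> G" and cN: "cyclic_group (G\<lparr>carrier := N\<rparr>)" and cQ: "cyclic_group (G Mod N)"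
  shows "\<exists>N. N \<lhd> G \<and> cyclic_group (G\<lparr>carrier := N\<rparr>) \<and> cyclic_group (G Mod N) \<and> even (order (G Mod N))"
proof (cases "even (order (G Mod N))")
  case True thus ?thesis using nN cN cQ by blast
next
  case False
  interpret N: normal N G by (rule nN)
  have sN: "subgroup N G" by (rule N.subgroup_axioms)
  have grpH: "group (G\<lparr>carrier := N\<rparr>)" using sN subgroup.subgroup_is_group is_group by blast
  have "\<exists>a\<in>N. N = range (\<lambda>k::int. a [^]\<^bsub>G\<lparr>carrier := N\<rparr>\<^esub> k)"
    using group.cyclic_group[OF grpH] cN by simp
  then obtain a where aN: "a \<in> N" and Nr0: "N = range (\<lambda>k::int. a [^]\<^bsub>G\<lparr>carrier := N\<rparr>\<^esub> k)"
    by blast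
  have "range (\<lambda>k::int. a [^]\<^bsub>G\<lparr>carrier := N\<rparr>\<^esub> k) = range (\<lambda>k::int. a [^] k)"
    using int_pow_consistent[OF sN aN] by simp
  with Nr0 have Nr: "N = range (\<lambda>k::int. a [^] k)" by (rule trans)
  have a: "a \<in> carrier G" by (rule subgroup.mem_carrier[OF sN aN])
  have ordQ: "order (G Mod N) = card (rcosets N)" by (simp add: order_def FactGroup_def)
  have lag: "card (rcosets N) * card N = order G" by (rule lagrange[OF sN])
  hence evN: "even (card N)" using False ev ordQ by (metis even_mult_iff)
  have "generate G {a} = N" unfolding generate_pow[OF a] Nr by blast
  hence orda: "ord a = card N" using generate_pow_card[OF a] by simp
  define M where "M = range (\<lambda>k::int. a [^] (2*k))"
  have memM: "a [^] j \<in> M \<longleftrightarrow> even j" for j :: int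
  proof
    assume "a [^] j \<in> M"
    then obtain k :: int where k: "a [^] j = a [^] (2*k)" unfolding M_def by auto
    have "a [^] (j - 2*k) = \<one>" using k a by (simp add: int_pow_diff)
    hence "int (ord a) dvd (j - 2*k)" using int_pow_eq_id[OF a] by simp
    hence "2 dvd (j - 2*k)" using evN orda by (metis dvd_trans even_of_nat)
    thus "even j" by presburger
  next
    assume "even j" thus "a [^] j \<in> M" unfolding M_def by auto
  qed
  have MN: "M \<subseteq> N" unfolding M_def Nr by auto
  have Msub: "subgroup M G"
  proof
    show "M \<subseteq> carrier G" using MN sN subgroup.subset by blast
    show "\<one> \<in> M" using memM[of 0] a by simp
    fix x y assume "x \<in> M" "y \<in> M"
    then obtain i j :: int where "x = a [^] (2*i)" "y = a [^] (2*j)" unfolding M_def by auto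
    hence "x \<otimes> y = a [^] (2*(i+j))" using a by (simp add: int_pow_mult distrib_left)
    thus "x \<otimes> y \<in> M" unfolding M_def by blast
  next
    fix x assume "x \<in> M"
    then obtain i :: int where "x = a [^] (2*i)" unfolding M_def by auto
    hence "inv x = a [^] (2*(-i))" using a by (simp add: int_pow_neg)
    thus "inv x \<in> M" unfolding M_def by blast
  qed
  have splitN: "x \<in> M \<or> a \<otimes> x \<in> M" if xN: "x \<in> N" for x
  proof -
    obtain j where j: "x = a [^] (j::int)" using xN Nr by auto
    have "a \<otimes> x = a [^] (1 + j)" using a j by (simp add: int_pow_mult)
    thus ?thesis using j memM by (metis even_plus_one_iff add.commute)
  qed
  have aM: "a \<notin> M" using memM[of 1] a by simp
  have nM: "M \<lhd> G"
    unfolding normal_inv_iff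
  proof (intro conjI Msub ballI)
    fix g h assume g: "g \<in> carrier G" and h: "h \<in> M"
    then obtain k :: int where k: "h = a [^] (2*k)" unfolding M_def by auto
    have "g \<otimes> a \<otimes> inv g \<in> N" by (rule N.inv_op_closed2[OF g aN])
    hence "g \<otimes> a \<otimes> inv g \<in> range (\<lambda>k::int. a [^] k)" by (subst Nr[symmetric])
    then obtain j where j: "g \<otimes> a \<otimes> inv g = a [^] (j::int)" by (auto simp: image_iff)
    have "g \<otimes> h \<otimes> inv g = a [^] (j * (2*k))"
      using conj_int_pow[OF g a] j k a by (simp add: int_pow_pow)
    thus "g \<otimes> h \<otimes> inv g \<in> M" using memM by simp
  qed
  have cM: "cyclic_group (G\<lparr>carrier := M\<rparr>)"
  proof -
    have grpM: "group (G\<lparr>carrier := M\<rparr>)" using Msub subgroup.subgroup_is_group is_group by blast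
    have a2: "a [^] (2::int) \<in> M" using memM by simp
    have "range (\<lambda>k::int. (a [^] (2::int)) [^]\<^bsub>G\<lparr>carrier := M\<rparr>\<^esub> k) = M"
      using int_pow_consistent[OF Msub a2, symmetric] a unfolding M_def
      by (simp add: int_pow_pow)
    hence "\<exists>x\<in>carrier (G\<lparr>carrier := M\<rparr>). carrier (G\<lparr>carrier := M\<rparr>) = range (\<lambda>k::int. x [^]\<^bsub>G\<lparr>carrier := M\<rparr>\<^esub> k)"
      using a2 by (intro bexI[of _ "a [^] (2::int)"]) simp_all
    thus ?thesis using group.cyclic_group[OF grpM] by blast
  qed
  interpret M: normal M G by (rule nM)
  have grpQ: "group (G Mod M)" by (rule M.factorgroup_is_group)
  have grpQN: "group (G Mod N)" by (rule N.factorgroup_is_group)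
  have hM: "(\<lambda>x. M #> x) \<in> hom G (G Mod M)" by (rule M.r_coset_hom_Mod)
  have hN: "(\<lambda>x. N #> x) \<in> hom G (G Mod N)" by (rule N.r_coset_hom_Mod)
  have powM: "(M #> x) [^]\<^bsub>G Mod M\<^esub> (k::int) = M #> (x [^] k)" if "x \<in> carrier G" for x k
    using hom_int_pow[OF hM that is_group grpQ] by simp
  have powMn: "(M #> x) [^]\<^bsub>G Mod M\<^esub> (k::nat) = M #> (x [^] k)" if "x \<in> carrier G" for x k
    using hom_nat_pow[OF hM that is_group grpQ] by simp
  have powN: "(N #> x) [^]\<^bsub>G Mod N\<^esub> (k::int) = N #> (x [^] k)" if "x \<in> carrier G" for x k
    using hom_int_pow[OF hN that is_group grpQN] by simp
  have powNn: "(N #> x) [^]\<^bsub>G Mod N\<^esub> (k::nat) = N #> (x [^] k)" if "x \<in> carrier G" for x k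
    using hom_nat_pow[OF hN that is_group grpQN] by simp
  have multM: "(M #> x) \<otimes>\<^bsub>G Mod M\<^esub> (M #> y) = M #> (x \<otimes> y)"
    if "x \<in> carrier G" "y \<in> carrier G" for x y
    using hom_mult[OF hM that] by simp
  have carrM: "M #> x \<in> carrier (G Mod M)" if "x \<in> carrier G" for x
    using hM that by (auto simp: hom_def)
  have eqM: "M #> x = M \<longleftrightarrow> x \<in> M" if x: "x \<in> carrier G" for x
    using subgroup.rcos_const[OF Msub is_group] rcos_self[OF x Msub] by auto
  have eqN: "N #> x = N \<longleftrightarrow> x \<in> N" if x: "x \<in> carrier G" for x
    using subgroup.rcos_const[OF sN is_group] rcos_self[OF x sN] by auto
  have "\<exists>W\<in>carrier (G Mod N). carrier (G Mod N) = range (\<lambda>k::int. W [^]\<^bsub>G Mod N\<^esub> k)"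
    using group.cyclic_group[OF grpQN] cQ by blast
  then obtain W where WQ: "W \<in> carrier (G Mod N)"
      and Wr: "carrier (G Mod N) = range (\<lambda>k::int. W [^]\<^bsub>G Mod N\<^esub> k)" by blast
  obtain g where g: "g \<in> carrier G" and Wg: "W = N #> g"
    using WQ unfolding carrier_FactGroup by blast
  define n where "n = order (G Mod N)"
  have oddn: "odd n" using False n_def by simp
  have gen: "\<forall>Y\<in>carrier (G Mod M). \<exists>(i::int) (j::int).
               Y = (M #> a) [^]\<^bsub>G Mod M\<^esub> i \<otimes>\<^bsub>G Mod M\<^esub> (M #> g) [^]\<^bsub>G Mod M\<^esub> j"
  proof
    fix Y assume "Y \<in> carrier (G Mod M)"
    then obtain y where y: "y \<in> carrier G" and Yy: "Y = M #> y" unfolding carrier_FactGroup by blast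
    have "N #> y \<in> carrier (G Mod N)" unfolding carrier_FactGroup using y by blast
    then obtain j :: int where "N #> y = W [^]\<^bsub>G Mod N\<^esub> j" using Wr by auto
    hence "N #> y = N #> (g [^] j)" using powN[OF g] Wg by simp
    hence "y \<in> N #> (g [^] j)" using repr_independenceD[OF sN y] by simp
    then obtain h where h: "h \<in> N" and yh: "y = h \<otimes> g [^] j" unfolding r_coset_def by blast
    have "h \<in> range (\<lambda>k::int. a [^] k)" using h by (subst Nr[symmetric])
    then obtain i :: int where hi: "h = a [^] i" by (auto simp: image_iff)
    have "Y = M #> (a [^] i \<otimes> g [^] j)" using Yy yh hi by simp
    also have "\<dots> = (M #> a) [^]\<^bsub>G Mod M\<^esub> i \<otimes>\<^bsub>G Mod M\<^esub> (M #> g) [^]\<^bsub>G Mod M\<^esub> j"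
      using multM powM a g by simp
    finally show "\<exists>(i::int) (j::int).
               Y = (M #> a) [^]\<^bsub>G Mod M\<^esub> i \<otimes>\<^bsub>G Mod M\<^esub> (M #> g) [^]\<^bsub>G Mod M\<^esub> j" by blast
  qed
  have "W [^]\<^bsub>G Mod N\<^esub> n = \<one>\<^bsub>G Mod N\<^esub>"
    unfolding n_def by (rule group.pow_order_eq_1[OF grpQN WQ])
  hence "N #> (g [^] n) = N" using powNn[OF g] Wg by simp
  hence gnN: "g [^] n \<in> N" using eqN g by simp
  have gn: "g [^] n \<in> carrier G" using g by simp
  have a2: "a \<otimes> a \<in> M"
  proof -
    have "a [^] (2::int) \<in> M" using memM by simp
    moreover have "a [^] (2::int) = a \<otimes> a" using int_pow_mult[OF a, of 1 1] a by simp
    ultimately show ?thesis by simp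
  qed
  have AA: "(M #> a) \<otimes>\<^bsub>G Mod M\<^esub> (M #> a) = \<one>\<^bsub>G Mod M\<^esub>"
    using multM[OF a a] eqM a2 a by simp
  have A: "M #> a \<in> carrier (G Mod M)" using carrM a by simp
  have Y: "M #> g \<in> carrier (G Mod M)" using carrM g by simp
  have Xn: "(M #> g) [^]\<^bsub>G Mod M\<^esub> n = \<one>\<^bsub>G Mod M\<^esub> \<or> (M #> g) [^]\<^bsub>G Mod M\<^esub> n = M #> a"
  proof (cases "g [^] n \<in> M")
    case True thus ?thesis using powMn[OF g] eqM[OF gn] by simp
  next
    case False
    hence "a \<otimes> g [^] n \<in> M" using splitN gnN by blast
    hence "(M #> a) \<otimes>\<^bsub>G Mod M\<^esub> (M #> g) [^]\<^bsub>G Mod M\<^esub> n = (M #> a) \<otimes>\<^bsub>G Mod M\<^esub> (M #> a)"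
      using AA multM[OF a gn] powMn[OF g] eqM a gn by simp
    hence "(M #> g) [^]\<^bsub>G Mod M\<^esub> n = M #> a"
      using group.lcancel'[OF grpQ A monoid.nat_pow_closed[OF group.is_monoid[OF grpQ] Y] A] by blast
    thus ?thesis by simp
  qed
  have comm: "(M #> a) \<otimes>\<^bsub>G Mod M\<^esub> (M #> g) = (M #> g) \<otimes>\<^bsub>G Mod M\<^esub> (M #> a)"
  proof -
    define c where "c = g \<otimes> inv a \<otimes> inv g"
    have ia: "inv a \<in> N" using subgroup.m_inv_closed[OF sN aN] .
    have cN: "c \<in> N" unfolding c_def by (rule N.inv_op_closed2[OF g ia])
    have cc: "c \<in> carrier G" using c_def a g by simp
    have canc: "inv z \<otimes> (z \<otimes> w) = w" "z \<otimes> (inv z \<otimes> w) = w"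
      if "z \<in> carrier G" "w \<in> carrier G" for z w
      using that by (simp_all add: m_assoc[symmetric])
    have "c \<notin> M"
    proof
      assume "c \<in> M"
      hence "inv g \<otimes> c \<otimes> g \<in> M" by (rule M.inv_op_closed1[OF g])
      moreover have "inv g \<otimes> c \<otimes> g = inv a" unfolding c_def using a g canc by (simp add: m_assoc)
      ultimately have "inv (inv a) \<in> M" using subgroup.m_inv_closed[OF Msub] by metis
      thus False using aM a by simp
    qed
    hence acM: "a \<otimes> c \<in> M" using splitN cN by blast
    have "a \<otimes> g = (a \<otimes> c) \<otimes> (g \<otimes> a)" unfolding c_def using a g canc by (simp add: m_assoc)
    hence "a \<otimes> g \<in> M #> (g \<otimes> a)" using rcosI[OF acM subgroup.subset[OF Msub]] a g by simp
    hence "M #> (g \<otimes> a) = M #> (a \<otimes> g)" using repr_independence[OF _ _ Msub] a g by simp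
    thus ?thesis using multM a g by simp
  qed
  have cyc: "cyclic_group (G Mod M)"
    by (rule group.cyc_lemma[OF grpQ A Y AA comm oddn Xn gen])
  have ev2: "even (order (G Mod M))"
  proof (rule ccontr)
    assume "odd (order (G Mod M))"
    hence "(M #> a) [^]\<^bsub>G Mod M\<^esub> order (G Mod M) = M #> a"
      by (rule group.odd_pow_inv2[OF grpQ A AA])
    moreover have "(M #> a) [^]\<^bsub>G Mod M\<^esub> order (G Mod M) = \<one>\<^bsub>G Mod M\<^esub>"
      by (rule group.pow_order_eq_1[OF grpQ A])
    ultimately have "M #> a = M" by simp
    thus False using eqM a aM by simp
  qed
  show ?thesis using nM cM cyc ev2 by blast
qed




lemma hom_Zm_lin:
  assumes f: "f \<in> hom (integer_mod_group m) (integer_mod_group m)" and m: "m \<ge> 2"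
    and c: "c \<in> {0..<int m}"
  shows "f c = (c * f 1) mod int m"
proof -
  have c1: "(1::int) \<in> carrier (integer_mod_group m)" using m by simp
  have "1 [^]\<^bsub>integer_mod_group m\<^esub> (nat c) = c" using c by simp
  hence "f c = f (1 [^]\<^bsub>integer_mod_group m\<^esub> (nat c))" by simp
  also have "\<dots> = f 1 [^]\<^bsub>integer_mod_group m\<^esub> (nat c)"
    by (rule hom_nat_pow[OF f c1]) simp_all
  also have "\<dots> = (c * f 1) mod int m" using c by simp
  finally show ?thesis .
qed

lemma phi_struct:
  assumes m: "m \<ge> 2" and n: "n > 0"
    and phi: "phi \<in> hom (integer_mod_group n) (AutoGroup (integer_mod_group m))"
  shows "\<exists>u. u ^ n mod int m = 1 \<and>
     (\<forall>b\<in>{0..<int n}. \<forall>c\<in>{0..<int m}. phi b c = (c * u ^ (nat b)) mod int m)"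
proof -
  let ?Zm = "integer_mod_group m" and ?Zn = "integer_mod_group n"
  have grpA: "group (AutoGroup ?Zm)" by (rule group.AutoGroup) simp
  have carrA: "carrier (AutoGroup ?Zm) = auto ?Zm" by (simp add: AutoGroup_def BijGroup_def)
  have carrZm: "carrier ?Zm = {0..<int m}" using m by (simp add: carrier_integer_mod_group)
  have carrZn: "carrier ?Zn = {0..<int n}" using n by (simp add: carrier_integer_mod_group)
  have phib: "phi b \<in> auto ?Zm" if "b \<in> {0..<int n}" for b
    using phi that carrA carrZn by (auto simp: hom_def)
  have phihom: "phi b \<in> hom ?Zm ?Zm" if "b \<in> {0..<int n}" for b
    using phib[OF that] by (simp add: auto_def)
  have phiBij: "phi b \<in> Bij {0..<int m}" if "b \<in> {0..<int n}" for b
    using phib[OF that] carrZm by (simp add: auto_def)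
  have lin: "phi b c = (c * phi b 1) mod int m" if "b \<in> {0..<int n}" "c \<in> {0..<int m}" for b c
    by (rule hom_Zm_lin[OF phihom[OF that(1)] m that(2)])
  define v where "v b = phi b 1" for b
  have 1: "(1::int) \<in> {0..<int m}" using m by simp
  have vcarr: "v b \<in> {0..<int m}" if "b \<in> {0..<int n}" for b
    using phihom[OF that] 1 carrZm unfolding v_def by (auto simp: hom_def)
  have v0: "v 0 = 1"
  proof -
    have "phi \<one>\<^bsub>?Zn\<^esub> = \<one>\<^bsub>AutoGroup ?Zm\<^esub>"
      by (rule hom_one[OF phi]) (simp_all add: grpA)
    hence "phi 0 = (\<lambda>x\<in>{0..<int m}. x)" using carrZm by (simp add: AutoGroup_def BijGroup_def)
    thus ?thesis using 1 v_def by simp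
  qed
  have vadd: "v ((b + d) mod int n) = (v d * v b) mod int m"
    if b: "b \<in> {0..<int n}" and d: "d \<in> {0..<int n}" for b d
  proof -
    have "phi (b \<otimes>\<^bsub>?Zn\<^esub> d) = phi b \<otimes>\<^bsub>AutoGroup ?Zm\<^esub> phi d"
      using phi b d carrZn by (simp add: hom_def)
    hence "phi ((b + d) mod int n) = compose {0..<int m} (phi b) (phi d)"
      using phiBij[OF b] phiBij[OF d] carrZm by (simp add: AutoGroup_def BijGroup_def)
    hence "v ((b + d) mod int n) = phi b (v d)" using 1 by (simp add: v_def compose_def)
    thus ?thesis using lin[OF b vcarr[OF d]] v_def by simp
  qed
  define u where "u = v (1 mod int n)"
  have u1: "1 mod int n \<in> {0..<int n}" using n by simp
  have vpow: "b < n \<longrightarrow> v (int b) mod int m = u ^ b mod int m" for b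
  proof (induction b)
    case 0 thus ?case using v0 by simp
  next
    case (Suc b)
    show ?case
    proof
      assume sb: "Suc b < n"
      hence n2: "n \<ge> 2" by simp
      hence "1 mod int n = 1" by simp
      hence u_def': "u = v 1" using u_def by simp
      have "int (Suc b) = (int b + 1) mod int n" using sb by simp
      hence "v (int (Suc b)) = (v 1 * v (int b)) mod int m"
        using vadd[of "int b" 1] sb n2 by (simp add: add.commute)
      hence "v (int (Suc b)) mod int m = (u * (v (int b) mod int m)) mod int m"
        using u_def' by (simp add: mod_mult_right_eq)
      also have "\<dots> = u ^ Suc b mod int m" using Suc.IH sb by (simp add: mod_mult_right_eq)
      finally show "v (int (Suc b)) mod int m = u ^ Suc b mod int m" .
    qed
  qed
  have un: "u ^ n mod int m = 1"
  proof -
    have nm1: "int (n - 1) \<in> {0..<int n}" using n by simp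
    have "(int (n - 1) + 1 mod int n) mod int n = 0"
      using n by (cases "n = 1") (auto simp: of_nat_diff)
    hence "v 0 = (u * v (int (n - 1))) mod int m"
      using vadd[OF nm1 u1] u_def by simp
    also have "\<dots> = (u * (v (int (n - 1)) mod int m)) mod int m" by (simp add: mod_mult_right_eq)
    also have "\<dots> = (u * (u ^ (n - 1) mod int m)) mod int m" using vpow[of "n - 1"] n by simp
    also have "\<dots> = u ^ n mod int m" using n
      by (simp add: mod_mult_right_eq power_eq_if[of u n])
    finally show ?thesis using v0 by simp
  qed
  have "\<forall>b\<in>{0..<int n}. \<forall>c\<in>{0..<int m}. phi b c = (c * u ^ (nat b)) mod int m"
  proof (intro ballI)
    fix b c assume b: "b \<in> {0..<int n}" and c: "c \<in> {0..<int m}"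
    have "phi b c = (c * v b) mod int m" using lin[OF b c] v_def by simp
    also have "\<dots> = (c * (v (int (nat b)) mod int m)) mod int m" using b by (simp add: mod_mult_right_eq)
    also have "\<dots> = (c * (u ^ nat b mod int m)) mod int m" using vpow[of "nat b"] b by (simp add: nat_less_iff)
    also have "\<dots> = (c * u ^ (nat b)) mod int m" by (simp add: mod_mult_right_eq)
    finally show "phi b c = (c * u ^ (nat b)) mod int m" .
  qed
  thus ?thesis using un by blast
qed

lemma pow_mod_period:
  fixes u :: int
  assumes "u ^ K mod M = 1 mod M"
  shows "u ^ i mod M = u ^ (i mod K) mod M"
proof -
  have q: "(u ^ K) ^ q mod M = 1 mod M" for q
  proof -
    have "(u ^ K) ^ q mod M = (u ^ K mod M) ^ q mod M" by (simp add: power_mod)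
    also have "\<dots> = (1 mod M) ^ q mod M" using assms by simp
    also have "\<dots> = 1 mod M" by (simp add: power_mod)
    finally show ?thesis .
  qed
  have "u ^ i = u ^ (K * (i div K) + i mod K)" by simp
  also have "\<dots> = (u ^ K) ^ (i div K) * u ^ (i mod K)" by (simp only: power_add power_mult)
  finally have e: "u ^ i = (u ^ K) ^ (i div K) * u ^ (i mod K)" .
  have "u ^ i mod M = (((u ^ K) ^ (i div K)) mod M * u ^ (i mod K)) mod M"
    unfolding e by (simp add: mod_mult_left_eq)
  also have "\<dots> = ((1 mod M) * u ^ (i mod K)) mod M" using q by simp
  also have "\<dots> = u ^ (i mod K) mod M" by (simp add: mod_mult_left_eq)
  finally show ?thesis .
qed

lemma even_geom_sum:
  fixes u :: int
  assumes "odd u"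
  shows "even (\<Sum>i<n. u ^ i) \<longleftrightarrow> even n"
  by (induction n) (use assms in auto)

lemma unit_mod_2pow:
  fixes u :: int
  assumes un: "u ^ n mod M = 1 mod M" and P: "(2::int) ^ k dvd M" and n: "odd n"
  shows "u mod 2 ^ k = 1 mod 2 ^ k"
proof (cases "k = 0")
  case True thus ?thesis by simp
next
  case False
  have "M dvd u ^ n - 1" using un by (simp add: mod_eq_dvd_iff)
  hence d: "2 ^ k dvd u ^ n - 1" using P dvd_trans by blast
  have "(2::int) dvd 2 ^ k" using False by simp
  hence "2 dvd u ^ n - 1" using d dvd_trans by blast
  hence "odd (u ^ n)" by simp
  hence ou: "odd u" using n by auto
  have "odd (\<Sum>i<n. u ^ i)" using even_geom_sum[OF ou] n by simp
  hence cop: "coprime ((2::int) ^ k) (\<Sum>i<n. u ^ i)" by simp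
  have "2 ^ k dvd (u - 1) * (\<Sum>i<n. u ^ i)" using d power_diff_1_eq[of u n] by simp
  hence "2 ^ k dvd u - 1" using cop coprime_dvd_mult_left_iff by blast
  thus ?thesis by (simp only: mod_eq_dvd_iff)
qed

lemma decomp2:
  fixes m :: nat
  assumes "m > 0"
  shows "\<exists>k m'. m = 2 ^ k * m' \<and> odd m'"
  using assms
proof (induction m rule: less_induct)
  case (less m)
  show ?case
  proof (cases "odd m")
    case True thus ?thesis by (rule_tac x=0 in exI) simp
  next
    case False
    then obtain r where r: "m = 2 * r" by blast
    hence "r < m" "r > 0" using less.prems by auto
    then obtain k m' where "r = 2 ^ k * m'" "odd m'" using less.IH by blast
    thus ?thesis using r by (rule_tac x="Suc k" in exI) auto
  qed
qed

lemma mod_mult_cong_left: "(a::int) mod c = b mod c \<Longrightarrow> (a * x) mod c = (b * x) mod c"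
  by (metis mod_mult_left_eq)

definition psi :: "nat \<Rightarrow> int \<Rightarrow> int \<Rightarrow> int \<Rightarrow> int" where
  "psi m' u t = (\<lambda>x\<in>{0..<int m'}. (u ^ nat t * x) mod int m')"

lemma psi_hom:
  assumes m': "m' > 0" and N: "N > 0" and uN: "u ^ N mod int m' = 1 mod int m'"
  shows "psi m' u \<in> hom (integer_mod_group N) (AutoGroup (integer_mod_group m'))"
proof -
  let ?S = "{0..<int m'}"
  have carrZm: "carrier (integer_mod_group m') = ?S" using m' by (simp add: carrier_integer_mod_group)
  have carrZN: "carrier (integer_mod_group N) = {0..<int N}" using N by (simp add: carrier_integer_mod_group)
  have carrA: "carrier (AutoGroup (integer_mod_group m')) = auto (integer_mod_group m')"
    by (simp add: AutoGroup_def BijGroup_def)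
  have range: "psi m' u t x \<in> ?S" if "x \<in> ?S" for t x
    using that m' by (simp add: psi_def)
  have inj: "inj_on (psi m' u t) ?S" if t: "t \<in> {0..<int N}" for t
  proof (rule inj_onI)
    fix x y assume x: "x \<in> ?S" and y: "y \<in> ?S" and e: "psi m' u t x = psi m' u t y"
    define w where "w = u ^ ((N - 1) * nat t)"
    have e1: "(N - 1) * nat t + nat t = N * nat t" using N by (cases N) auto
    have "w * u ^ nat t = u ^ (N * nat t)" unfolding w_def by (simp only: power_add[symmetric] e1)
    moreover have "u ^ (N * nat t) mod int m' = 1 mod int m'"
      using pow_mod_period[OF uN, of "N * nat t"] by simp
    ultimately have wu: "(w * u ^ nat t) mod int m' = 1 mod int m'" by simp
    have "(u ^ nat t * x) mod int m' = (u ^ nat t * y) mod int m'" using e x y by (simp add: psi_def)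
    hence "(w * ((u ^ nat t * x) mod int m')) mod int m' = (w * ((u ^ nat t * y) mod int m')) mod int m'"
      by simp
    hence "(w * (u ^ nat t * x)) mod int m' = (w * (u ^ nat t * y)) mod int m'"
      by (simp only: mod_mult_right_eq)
    hence "((w * u ^ nat t) mod int m' * x) mod int m' = ((w * u ^ nat t) mod int m' * y) mod int m'"
      by (simp add: mult.assoc[symmetric] mod_mult_left_eq)
    hence "((1 mod int m') * x) mod int m' = ((1 mod int m') * y) mod int m'" using wu by simp
    hence "(1 * x) mod int m' = (1 * y) mod int m'" by (simp only: mod_mult_left_eq)
    hence "x mod int m' = y mod int m'" by simp
    thus "x = y" using x y by simp
  qed
  have auto: "psi m' u t \<in> auto (integer_mod_group m')" if t: "t \<in> {0..<int N}" for t
  proof -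
    have "psi m' u t \<in> hom (integer_mod_group m') (integer_mod_group m')"
    proof (rule homI)
      fix x assume "x \<in> carrier (integer_mod_group m')"
      thus "psi m' u t x \<in> carrier (integer_mod_group m')" using range carrZm by simp
    next
      fix x y assume "x \<in> carrier (integer_mod_group m')" "y \<in> carrier (integer_mod_group m')"
      hence x: "x \<in> ?S" and y: "y \<in> ?S" using carrZm by auto
      have "psi m' u t ((x + y) mod int m') = (u ^ nat t * (x + y)) mod int m'"
        using m' by (simp add: psi_def mod_mult_right_eq)
      also have "\<dots> = (psi m' u t x + psi m' u t y) mod int m'"
        using x y by (simp add: psi_def distrib_left mod_add_eq)
      finally show "psi m' u t (x \<otimes>\<^bsub>integer_mod_group m'\<^esub> y) =
          psi m' u t x \<otimes>\<^bsub>integer_mod_group m'\<^esub> psi m' u t y" by simp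
    qed
    moreover have "psi m' u t \<in> Bij ?S"
    proof -
      have "psi m' u t ` ?S = ?S"
        by (rule endo_inj_surj) (use range inj[OF t] in auto)
      hence "bij_betw (psi m' u t) ?S ?S" using inj[OF t] by (simp add: bij_betw_def)
      moreover have "psi m' u t \<in> extensional ?S" by (simp add: psi_def)
      ultimately show ?thesis by (simp add: Bij_def)
    qed
    ultimately show ?thesis using carrZm by (simp add: auto_def)
  qed
  show ?thesis
  proof (rule homI)
    fix t assume "t \<in> carrier (integer_mod_group N)"
    thus "psi m' u t \<in> carrier (AutoGroup (integer_mod_group m'))" using auto carrA carrZN by simp
  next
    fix t t' assume "t \<in> carrier (integer_mod_group N)" "t' \<in> carrier (integer_mod_group N)"
    hence t: "t \<in> {0..<int N}" and t': "t' \<in> {0..<int N}" using carrZN by auto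
    have B: "psi m' u t \<in> Bij ?S" "psi m' u t' \<in> Bij ?S" using auto[OF t] auto[OF t'] by (auto simp: auto_def carrZm)
    have "psi m' u ((t + t') mod int N) = compose ?S (psi m' u t) (psi m' u t')"
    proof (rule ext)
      fix x show "psi m' u ((t + t') mod int N) x = compose ?S (psi m' u t) (psi m' u t') x"
      proof (cases "x \<in> ?S")
        case False thus ?thesis by (auto simp: psi_def compose_def)
      next
        case True
        have nt: "nat ((t + t') mod int N) = (nat t + nat t') mod N"
          using t t' by (simp add: nat_mod_distrib nat_add_distrib)
        have "u ^ nat ((t + t') mod int N) mod int m' = u ^ (nat t + nat t') mod int m'"
          using pow_mod_period[OF uN, of "nat t + nat t'"] nt by simp
        hence "(u ^ nat ((t + t') mod int N) * x) mod int m' = (u ^ (nat t + nat t') * x) mod int m'"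
          by (rule mod_mult_cong_left)
        also have "\<dots> = (u ^ nat t * ((u ^ nat t' * x) mod int m')) mod int m'"
          by (simp add: power_add mult.assoc mod_mult_right_eq)
        finally show ?thesis using True range by (simp add: psi_def compose_def)
      qed
    qed
    thus "psi m' u (t \<otimes>\<^bsub>integer_mod_group N\<^esub> t') =
        psi m' u t \<otimes>\<^bsub>AutoGroup (integer_mod_group m')\<^esub> psi m' u t'"
      using B carrZm by (simp add: AutoGroup_def BijGroup_def)
  qed
qed

lemma H1: "((a::int) mod M + (v * (c mod M)) mod M) mod M = (a + v * c) mod M"
  by (metis mod_add_eq mod_mult_right_eq)
lemma dmod: "(M::int) dvd x mod M - x"
  by (metis mod_eq_dvd_iff mod_mod_trivial)
lemma pow1_dvd: "(P::int) dvd u - 1 \<Longrightarrow> P dvd u ^ b - 1"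
  by (metis dvd_trans power_diff_1_eq dvd_triv_left)
lemma cop_dvd: "coprime (A::int) B \<Longrightarrow> A dvd x \<Longrightarrow> B dvd x \<Longrightarrow> A * B dvd x"
  by (simp add: divides_mult)

lemma resplit:
  assumes m2: "m \<ge> 2" and n: "n > 0" and oddn: "odd n" and mk: "m = 2 ^ k * m'" and om': "odd m'"
    and phi: "phi \<in> hom (integer_mod_group n) (AutoGroup (integer_mod_group m))"
  shows "\<exists>psi'. psi' \<in> hom (integer_mod_group (2 ^ k * n)) (AutoGroup (integer_mod_group m')) \<and>
     semidirect_product (integer_mod_group m) (integer_mod_group n) phi \<cong>
     semidirect_product (integer_mod_group m') (integer_mod_group (2 ^ k * n)) psi'"
proof -
  obtain u where un: "u ^ n mod int m = 1"
    and phiu: "\<forall>b\<in>{0..<int n}. \<forall>c\<in>{0..<int m}. phi b c = (c * u ^ nat b) mod int m"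
    using phi_struct[OF m2 n phi] by blast
  define P where "P = (2::int) ^ k"
  define N where "N = 2 ^ k * n"
  have m'pos: "m' > 0" using om' by (cases m') auto
  have Npos: "N > 0" using n N_def by simp
  have intm: "int m = P * int m'" using mk P_def by simp
  have intN: "int N = P * int n" using N_def P_def by simp
  have m'dvd: "int m' dvd int m" using intm by simp
  have Pdvd: "P dvd int m" using intm by simp
  have ndvdN: "int n dvd int N" using intN by simp
  have un1: "u ^ n mod int m = 1 mod int m" using un m2 by simp
  have "int m dvd u ^ n - 1" using un1 by (simp only: mod_eq_dvd_iff)
  hence "int m' dvd u ^ n - 1" using m'dvd dvd_trans by blast
  hence un': "u ^ n mod int m' = 1 mod int m'" by (simp only: mod_eq_dvd_iff)
  have uN: "u ^ N mod int m' = 1 mod int m'"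
    using pow_mod_period[OF un', of N] N_def by simp
  have hompsi: "psi m' u \<in> hom (integer_mod_group N) (AutoGroup (integer_mod_group m'))"
    by (rule psi_hom[OF m'pos Npos uN])
  have "u mod 2 ^ k = 1 mod 2 ^ k"
    by (rule unit_mod_2pow[OF un1 _ oddn]) (use Pdvd P_def in simp)
  hence uP: "P dvd u - 1" unfolding P_def by (simp only: mod_eq_dvd_iff)
  have copPn: "coprime P (int n)" using oddn unfolding P_def by simp
  have copPm': "coprime P (int m')" using om' unfolding P_def by simp
  obtain x y where xy: "x * int n + y * P = gcd (int n) P" using bezout_int by blast
  hence xy1: "x * int n + y * P = 1" using copPn by (simp add: coprime_iff_gcd_eq_1 gcd.commute)
  define s where "s = x * int n"
  define e where "e = y * P"
  have se: "s + e = 1" using xy1 s_def e_def by simp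
  hence e_eq: "e = 1 - s" by simp
  have ns: "int n dvd s" unfolding s_def by simp
  have Pe: "P dvd e" unfolding e_def by simp
  define F where "F = (\<lambda>(a::int, b::int). (a mod int m', (a * s + b * e) mod int N))"
  let ?S = "semidirect_product (integer_mod_group m) (integer_mod_group n) phi"
  let ?S' = "semidirect_product (integer_mod_group m') (integer_mod_group N) (psi m' u)"
  have cS: "carrier ?S = {0..<int m} \<times> {0..<int n}"
    using m2 n by (simp add: semidirect_product_def carrier_integer_mod_group)
  have cS': "carrier ?S' = {0..<int m'} \<times> {0..<int N}"
    using m'pos Npos by (simp add: semidirect_product_def carrier_integer_mod_group)
  have mS: "(a, b) \<otimes>\<^bsub>?S\<^esub> (c, d) = ((a + phi b c) mod int m, (b + d) mod int n)" for a b c d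
    by (simp add: semidirect_product_def)
  have mS': "(a, b) \<otimes>\<^bsub>?S'\<^esub> (c, d) = ((a + psi m' u b c) mod int m', (b + d) mod int N)" for a b c d
    by (simp add: semidirect_product_def)
  have Fin: "F p \<in> carrier ?S'" for p
    using m'pos Npos cS' by (cases p) (simp add: F_def)
  have Fhom: "F \<in> hom ?S ?S'"
  proof (rule homI)
    fix p assume "p \<in> carrier ?S" thus "F p \<in> carrier ?S'" using Fin by blast
  next
    fix p q assume p: "p \<in> carrier ?S" and q: "q \<in> carrier ?S"
    obtain a b where pab: "p = (a, b)" by (cases p)
    obtain c d where qcd: "q = (c, d)" by (cases q)
    have a: "a \<in> {0..<int m}" and b: "b \<in> {0..<int n}" using p pab cS by auto
    have c: "c \<in> {0..<int m}" and d: "d \<in> {0..<int n}" using q qcd cS by auto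
    define nb where "nb = nat b"
    have phibc: "phi b c = (c * u ^ nb) mod int m" using phiu a b c nb_def by blast
    define R where "R = (a + phi b c) mod int m"
    define Q where "Q = (b + d) mod int n"
    define t where "t = (a * s + b * e) mod int N"
    define t' where "t' = (c * s + d * e) mod int N"
    have t0: "t \<ge> 0" using Npos t_def by simp
    have "t mod int n = (a * s + b * e) mod int n" unfolding t_def using ndvdN by (simp add: mod_mod_cancel)
    also have "\<dots> = b mod int n"
    proof -
      have "a * s + b * e - b = (a - b) * s" unfolding e_eq by (simp add: algebra_simps)
      hence "int n dvd a * s + b * e - b" using ns by simp
      thus ?thesis by (simp only: mod_eq_dvd_iff)
    qed
    also have "\<dots> = b" using b by simp
    finally have tmod: "t mod int n = b" .
    have "nat (t mod int n) = nat t mod nat (int n)" using t0 by (simp add: nat_mod_distrib)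
    hence ntb: "nat t mod n = nb" using tmod nb_def by simp
    have "u ^ nat t mod int m' = u ^ nb mod int m'"
      using pow_mod_period[OF un', of "nat t"] ntb by simp
    hence d1: "int m' dvd u ^ nat t - u ^ nb" by (simp only: mod_eq_dvd_iff)
    have d2: "int m dvd R - (a + c * u ^ nb)"
    proof -
      have "int m dvd R - (a + phi b c)" unfolding R_def by (rule dmod)
      moreover have "int m dvd phi b c - c * u ^ nb" unfolding phibc by (rule dmod)
      ultimately have "int m dvd (R - (a + phi b c)) + (phi b c - c * u ^ nb)" by (rule dvd_add)
      thus ?thesis by (simp add: algebra_simps)
    qed
    have comp1: "R mod int m' = (a mod int m' + psi m' u t (c mod int m')) mod int m'"
    proof -
      have cm: "c mod int m' \<in> {0..<int m'}" using m'pos by simp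
      have "(a mod int m' + psi m' u t (c mod int m')) mod int m' = (a + u ^ nat t * c) mod int m'"
        using cm by (simp add: psi_def H1)
      moreover have "int m' dvd R - (a + u ^ nat t * c)"
      proof -
        have "int m' dvd R - (a + c * u ^ nb)" using d2 m'dvd dvd_trans by blast
        moreover have "int m' dvd c * (u ^ nat t - u ^ nb)" using d1 by simp
        ultimately have "int m' dvd (R - (a + c * u ^ nb)) - c * (u ^ nat t - u ^ nb)" by (rule dvd_diff)
        thus ?thesis by (simp add: algebra_simps)
      qed
      hence "R mod int m' = (a + u ^ nat t * c) mod int m'" by (simp only: mod_eq_dvd_iff)
      ultimately show ?thesis by simp
    qed
    have comp2: "(R * s + Q * e) mod int N = (t + t') mod int N"
    proof -
      have rhs: "(t + t') mod int N = (a * s + b * e + (c * s + d * e)) mod int N"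
        unfolding t_def t'_def by (simp add: mod_add_eq)
      define D where "D = (R - a - c) * s + (Q - b - d) * e"
      have Deq: "R * s + Q * e - (a * s + b * e + (c * s + d * e)) = D" unfolding D_def by (simp add: algebra_simps)
      have "int n dvd D"
      proof -
        have "int n dvd Q - (b + d)" unfolding Q_def by (rule dmod)
        hence "int n dvd (Q - b - d) * e" using dvd_mult2[of "int n" "Q - (b + d)" e] by (simp add: diff_diff_eq)
        moreover have "int n dvd (R - a - c) * s" using ns by simp
        ultimately show ?thesis unfolding D_def by (simp add: dvd_add)
      qed
      moreover have "P dvd D"
      proof -
        have "P dvd R - (a + c * u ^ nb)" using d2 Pdvd dvd_trans by blast
        moreover have "P dvd c * (u ^ nb - 1)" using pow1_dvd[OF uP, of nb] by simp
        ultimately have "P dvd (R - (a + c * u ^ nb)) + c * (u ^ nb - 1)" by (rule dvd_add)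
        hence "P dvd R - a - c" by (simp add: algebra_simps)
        hence "P dvd (R - a - c) * s" by simp
        moreover have "P dvd (Q - b - d) * e" using Pe by simp
        ultimately show ?thesis unfolding D_def by (rule dvd_add)
      qed
      ultimately have "P * int n dvd D" using cop_dvd[OF copPn] by blast
      hence "int N dvd R * s + Q * e - (a * s + b * e + (c * s + d * e))" using intN Deq by simp
      hence "(R * s + Q * e) mod int N = (a * s + b * e + (c * s + d * e)) mod int N"
        by (simp only: mod_eq_dvd_iff)
      thus ?thesis using rhs by simp
    qed
    have "F (p \<otimes>\<^bsub>?S\<^esub> q) = (R mod int m', (R * s + Q * e) mod int N)"
      unfolding pab qcd mS R_def Q_def F_def by simp
    also have "\<dots> = ((a mod int m' + psi m' u t (c mod int m')) mod int m', (t + t') mod int N)"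
      using comp1 comp2 by simp
    also have "\<dots> = F p \<otimes>\<^bsub>?S'\<^esub> F q"
      unfolding pab qcd F_def t_def t'_def by (simp add: mS')
    finally show "F (p \<otimes>\<^bsub>?S\<^esub> q) = F p \<otimes>\<^bsub>?S'\<^esub> F q" .
  qed
  have Finj: "inj_on F (carrier ?S)"
  proof (rule inj_onI)
    fix p q assume p: "p \<in> carrier ?S" and q: "q \<in> carrier ?S" and Fpq: "F p = F q"
    obtain a b where pab: "p = (a, b)" by (cases p)
    obtain c d where qcd: "q = (c, d)" by (cases q)
    have a: "a \<in> {0..<int m}" and b: "b \<in> {0..<int n}" using p pab cS by auto
    have c: "c \<in> {0..<int m}" and d: "d \<in> {0..<int n}" using q qcd cS by auto
    have e1: "a mod int m' = c mod int m'" and e2: "(a * s + b * e) mod int N = (c * s + d * e) mod int N"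
      using Fpq pab qcd F_def by auto
    have dm': "int m' dvd a - c" using e1 by (simp only: mod_eq_dvd_iff)
    have dN: "int N dvd (a * s + b * e) - (c * s + d * e)" using e2 by (simp only: mod_eq_dvd_iff)
    have "P dvd (a * s + b * e) - (c * s + d * e)" using dN unfolding intN by (rule dvd_mult_left)
    moreover have "(a * s + b * e) - (c * s + d * e) = (a - c) - ((a - c) * e - (b - d) * e)"
      unfolding e_eq by (simp add: algebra_simps)
    moreover have "P dvd (a - c) * e - (b - d) * e" using Pe by simp
    ultimately have "P dvd (a - c)" by (metis dvd_add_left_iff diff_conv_add_uminus dvd_minus_iff)
    hence "P * int m' dvd a - c" using cop_dvd[OF copPm'] dm' by blast
    hence "a mod int m = c mod int m" using intm by (simp only: mod_eq_dvd_iff)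
    hence ac: "a = c" using a c by simp
    have "int n dvd (a * s + b * e) - (c * s + d * e)" using dN ndvdN dvd_trans by blast
    moreover have "(a * s + b * e) - (c * s + d * e) = (b - d) + ((a - c) * s - (b - d) * s)"
      unfolding e_eq by (simp add: algebra_simps)
    moreover have "int n dvd (a - c) * s - (b - d) * s" using ns by simp
    ultimately have "int n dvd ((b - d) + ((a - c) * s - (b - d) * s)) - ((a - c) * s - (b - d) * s)"
      by (metis dvd_diff)
    hence "int n dvd (b - d)" by simp
    hence "b mod int n = d mod int n" by (simp only: mod_eq_dvd_iff)
    hence "b = d" using b d by simp
    thus "p = q" using ac pab qcd by simp
  qed
  have Fimg: "F ` carrier ?S = carrier ?S'"
  proof (rule card_subset_eq)
    show "finite (carrier ?S')" using cS' by simp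
    show "F ` carrier ?S \<subseteq> carrier ?S'" using Fin by blast
    have "card (F ` carrier ?S) = card (carrier ?S)" by (rule card_image[OF Finj])
    also have "\<dots> = m * n" using cS by (simp add: card_cartesian_product)
    also have "\<dots> = m' * N" using mk N_def by simp
    also have "\<dots> = card (carrier ?S')" using cS' by (simp add: card_cartesian_product)
    finally show "card (F ` carrier ?S) = card (carrier ?S')" .
  qed
  have "F \<in> iso ?S ?S'" using Fhom Finj Fimg by (simp add: iso_def bij_betw_def)
  hence "?S \<cong> ?S'" by (rule is_isoI)
  thus ?thesis using hompsi N_def by blast
qed


theorem lemma4p1:
  fixes G :: "('g, 'e) monoid_scheme"
  assumes "group G" and "finite (carrier G)" and "even (order G)" and "metacyclic G"
  shows "(\<exists>N. N \<lhd> G \<and> cyclic_group (G\<lparr>carrier := N\<rparr>) \<and> cyclic_group (G Mod N)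
              \<and> even (order (G Mod N)))
       \<and> (split_metacyclic G \<longrightarrow> (\<exists>m n. is_split_metacyclic_with G m n \<and> even n))"
proof
  interpret G: group G by (rule assms(1))
  obtain N where nN: "N \<lhd> G" and cN: "cyclic_group (G\<lparr>carrier := N\<rparr>)" and cQ: "cyclic_group (G Mod N)"
    using assms(4) unfolding metacyclic_def by blast
  show "\<exists>N. N \<lhd> G \<and> cyclic_group (G\<lparr>carrier := N\<rparr>) \<and> cyclic_group (G Mod N)
              \<and> even (order (G Mod N))"
    by (rule G.part1[OF assms(2) assms(3) nN cN cQ])
next
  show "split_metacyclic G \<longrightarrow> (\<exists>m n. is_split_metacyclic_with G m n \<and> even n)"
  proof
    assume "split_metacyclic G"
    then obtain m n where smn: "is_split_metacyclic_with G m n" unfolding split_metacyclic_def by blast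
    then obtain phi where m: "0 < m" and n: "0 < n"
      and phi: "phi \<in> hom (integer_mod_group n) (AutoGroup (integer_mod_group m))"
      and iso1: "G \<cong> semidirect_product (integer_mod_group m) (integer_mod_group n) phi"
      unfolding is_split_metacyclic_with_def by blast
    show "\<exists>m n. is_split_metacyclic_with G m n \<and> even n"
    proof (cases "even n")
      case True thus ?thesis using smn by blast
    next
      case False
      have "carrier (semidirect_product (integer_mod_group m) (integer_mod_group n) phi)
            = {0..<int m} \<times> {0..<int n}"
        using m n by (simp add: semidirect_product_def carrier_integer_mod_group)
      hence "card (carrier (semidirect_product (integer_mod_group m) (integer_mod_group n) phi)) = m * n"
        by (simp add: card_cartesian_product)
      hence "order G = m * n" using iso_same_card[OF iso1] by (simp add: order_def)
      hence evm: "even m" using assms(3) False by simp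
      hence m2: "m \<ge> 2" using m by presburger
      obtain k m' where mk: "m = 2 ^ k * m'" and om': "odd m'" using decomp2[OF m] by blast
      have k: "k \<noteq> 0" using evm mk om' by auto
      obtain psi' where hp: "psi' \<in> hom (integer_mod_group (2 ^ k * n)) (AutoGroup (integer_mod_group m'))"
        and iso2: "semidirect_product (integer_mod_group m) (integer_mod_group n) phi \<cong>
                   semidirect_product (integer_mod_group m') (integer_mod_group (2 ^ k * n)) psi'"
        using resplit[OF m2 n False mk om' phi] by blast
      have "G \<cong> semidirect_product (integer_mod_group m') (integer_mod_group (2 ^ k * n)) psi'"
        using iso1 iso2 by (rule iso_trans)
      moreover have "0 < m'" using om' by (cases m') auto
      moreover have "0 < 2 ^ k * n" using n by simp
      ultimately have "is_split_metacyclic_with G m' (2 ^ k * n)"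
        unfolding is_split_metacyclic_with_def using hp by blast
      moreover have "even (2 ^ k * n)" using k by simp
      ultimately show ?thesis by blast
    qed
  qed
qed

end
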